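(* Let $v$ be the last installed view in the system. Then view $v$ will eventually be changed (i.e., $v.succ$ will eventually be installed).
   Context: System: servers $S=\{s_1,\dots,s_n\}$; reliable links, message passing; asynchronous; crash failures only (a server is correct if it does not crash); at most $f$ servers crash and $2f+1\le n$. Views form a sequence $v_0,v_1,\dots$ with $v_{k+1}=v_k.succ$; $v<w$ means $w$ is obtained from $v$ by applying $succ$ one or more times. Each server $s$ has a current view $s.cview$ (initially $v_0$), a local timeout per view, and a weight in each view; in every view each server's weight is strictly between $\mathbb{wl}=n/(2(n-f))$ and $\mathbb{wu}=n/(2f)$ and the total weight is at most $n$. A weighted majority for view $v$ is a set of servers whose weights in $v$ sum to more than $n/2$. View changer run by each server $s$ with $s.cview=v$: when its local timeout for $v$ expires it sends $\langle\text{change\_view},v.succ\rangle$ to all servers; once it has received or sent change\_view for $v.succ$ it forwards it if not already sent, disables read/write operations, sends $\langle\text{state\_update},(val,ts,cid),v,w\rangle$ to all servers — at this point it has uninstalled $v$ — waits until it has state\_update messages for view $v$ whose weights sum to more than $n/2$, adopts the value with lexicographically largest $(ts,cid)$, then sets $s.cview\leftarrow v.succ$ (installs $v.succ$), sets a new timeout and re-enables read/write operations. A view $v$ is installed in the system once at least one server installs $v$ and every server $s$ satisfies $s.cview\le v$. *)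

theory Defs
  imports Complex_Main "HOL-Library.Product_Lexorder" "HOL-Library.Cardinality"
begin

text \<open>
  Views v_0, v_1, ... are represented by natural numbers
  (v_k is k, succ is Suc, and the order on views is the order on nat).
  Servers form a finite type 's, so n = CARD('s).
  A server's replica state is a triple (val, ts, cid).
\<close>

type_synonym ('v, 'c) rstate = "'v \<times> nat \<times> 'c"

definition tskey :: "('v, 'c) rstate \<Rightarrow> nat \<times> 'c" where
  "tskey x = snd x"

datatype phase = Normal | Changing

text \<open>Global state. Links are modelled by the set of sent (broadcast) messages together
  with, for each server, the set of messages it has received so far.\<close>
record ('s, 'v, 'c) gstate =
  cview   :: "'s \<Rightarrow> nat"
  phase   :: "'s \<Rightarrow> phase"                        \<comment> \<open>Normal: ops enabled; Changing: v uninstalled\<close>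
  rst     :: "'s \<Rightarrow> ('v, 'c) rstate"
  crashed :: "'s set"
  sent_cv :: "('s \<times> nat) set"                      \<comment> \<open>change_view(w) sent by s to all\<close>
  sent_su :: "('s \<times> ('v, 'c) rstate \<times> nat) set"   \<comment> \<open>state_update(x, v) sent by s to all\<close>
  recv_cv :: "'s \<Rightarrow> ('s \<times> nat) set"
  recv_su :: "'s \<Rightarrow> ('s \<times> ('v, 'c) rstate \<times> nat) set"

datatype ('s, 'v, 'c) action =
    Timeout 's                                 \<comment> \<open>local timeout of s for its current view expires\<close>
  | DeliverCV 's "'s \<times> nat"
  | DeliverSU 's "'s \<times> ('v, 'c) rstate \<times> nat"
  | StartChange 's
  | Install 's
  | Op 's "('v, 'c) rstate"
  | Crash 's
  | Stutter

definition init_state :: "('s, 'v, 'c) gstate \<Rightarrow> bool" where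
  "init_state g \<longleftrightarrow> (\<forall>s. cview g s = 0) \<and> (\<forall>s. phase g s = Normal) \<and> crashed g = {}
     \<and> sent_cv g = {} \<and> sent_su g = {} \<and> (\<forall>s. recv_cv g s = {}) \<and> (\<forall>s. recv_su g s = {})"

definition su_senders :: "('s, 'v, 'c) gstate \<Rightarrow> 's \<Rightarrow> nat \<Rightarrow> 's set" where
  "su_senders g s v = {r. \<exists>x. (r, x, v) \<in> recv_su g s}"

definition weighted_majority :: "(nat \<Rightarrow> 's::finite \<Rightarrow> real) \<Rightarrow> nat \<Rightarrow> 's set \<Rightarrow> bool" where
  "weighted_majority weight v Q \<longleftrightarrow> (\<Sum>r\<in>Q. weight v r) > real CARD('s) / 2"

fun step :: "(nat \<Rightarrow> 's::finite \<Rightarrow> real) \<Rightarrow> ('s, 'v, 'c::linorder) action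
               \<Rightarrow> ('s, 'v, 'c) gstate \<Rightarrow> ('s, 'v, 'c) gstate \<Rightarrow> bool" where
  "step weight (Timeout s) g g' \<longleftrightarrow>
     s \<notin> crashed g \<and> phase g s = Normal \<and>
     g' = g\<lparr>sent_cv := insert (s, Suc (cview g s)) (sent_cv g)\<rparr>"
| "step weight (DeliverCV s m) g g' \<longleftrightarrow>
     s \<notin> crashed g \<and> m \<in> sent_cv g \<and> m \<notin> recv_cv g s \<and>
     g' = g\<lparr>recv_cv := (recv_cv g)(s := insert m (recv_cv g s))\<rparr>"
| "step weight (DeliverSU s m) g g' \<longleftrightarrow>
     s \<notin> crashed g \<and> m \<in> sent_su g \<and> m \<notin> recv_su g s \<and>
     g' = g\<lparr>recv_su := (recv_su g)(s := insert m (recv_su g s))\<rparr>"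
| "step weight (StartChange s) g g' \<longleftrightarrow>
     s \<notin> crashed g \<and> phase g s = Normal \<and>
     ((\<exists>r. (r, Suc (cview g s)) \<in> recv_cv g s) \<or> (s, Suc (cview g s)) \<in> sent_cv g) \<and>
     g' = g\<lparr>sent_cv := insert (s, Suc (cview g s)) (sent_cv g),
            phase := (phase g)(s := Changing),
            sent_su := insert (s, rst g s, cview g s) (sent_su g)\<rparr>"
| "step weight (Install s) g g' \<longleftrightarrow>
     s \<notin> crashed g \<and> phase g s = Changing \<and>
     weighted_majority weight (cview g s) (su_senders g s (cview g s)) \<and>
     (\<exists>r x. (r, x, cview g s) \<in> recv_su g s \<and>
        (\<forall>r' y. (r', y, cview g s) \<in> recv_su g s \<longrightarrow> tskey y \<le> tskey x) \<and>
        g' = g\<lparr>rst := (rst g)(s := x),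
               cview := (cview g)(s := Suc (cview g s)),
               phase := (phase g)(s := Normal)\<rparr>)"
| "step weight (Op s x) g g' \<longleftrightarrow>
     s \<notin> crashed g \<and> phase g s = Normal \<and> g' = g\<lparr>rst := (rst g)(s := x)\<rparr>"
| "step weight (Crash s) g g' \<longleftrightarrow>
     s \<notin> crashed g \<and> g' = g\<lparr>crashed := insert s (crashed g)\<rparr>"
| "step weight Stutter g g' \<longleftrightarrow> g' = g"

definition enabled :: "(nat \<Rightarrow> 's::finite \<Rightarrow> real) \<Rightarrow> ('s, 'v, 'c::linorder) action
                         \<Rightarrow> ('s, 'v, 'c) gstate \<Rightarrow> bool" where
  "enabled weight a g \<longleftrightarrow> (\<exists>g'. step weight a g g')"

text \<open>Actions of the view-changer / link layer performed by a server (subject to fairness).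
  Operations, crashes and stuttering are not required to happen.\<close>
fun fair_owner :: "('s, 'v, 'c) action \<Rightarrow> 's option" where
  "fair_owner (Timeout s) = Some s"
| "fair_owner (DeliverCV s m) = Some s"
| "fair_owner (DeliverSU s m) = Some s"
| "fair_owner (StartChange s) = Some s"
| "fair_owner (Install s) = Some s"
| "fair_owner (Op s x) = None"
| "fair_owner (Crash s) = None"
| "fair_owner Stutter = None"

definition correct :: "(nat \<Rightarrow> ('s, 'v, 'c) gstate) \<Rightarrow> 's \<Rightarrow> bool" where
  "correct \<sigma> s \<longleftrightarrow> (\<forall>i. s \<notin> crashed (\<sigma> i))"

text \<open>An admissible execution: starts in an initial state, every transition is a protocol step,
  at most f servers crash, and weak fairness holds for every action of a correct server
  (for delivery actions this is exactly reliability of the links; for Timeout it says that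
  the local timeout of a correct server that stays in a view eventually expires).\<close>
definition execution :: "(nat \<Rightarrow> 's::finite \<Rightarrow> real) \<Rightarrow> nat
      \<Rightarrow> (nat \<Rightarrow> ('s, 'v, 'c::linorder) gstate) \<Rightarrow> (nat \<Rightarrow> ('s, 'v, 'c) action) \<Rightarrow> bool" where
  "execution weight f \<sigma> lab \<longleftrightarrow>
     init_state (\<sigma> 0) \<and>
     (\<forall>i. step weight (lab i) (\<sigma> i) (\<sigma> (Suc i))) \<and>
     (\<forall>i. card (crashed (\<sigma> i)) \<le> f) \<and>
     (\<forall>a s i. fair_owner a = Some s \<longrightarrow> correct \<sigma> s \<longrightarrow>
        (\<forall>j\<ge>i. enabled weight a (\<sigma> j)) \<longrightarrow> (\<exists>j\<ge>i. lab j = a))"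

definition installed_in_system :: "('s, 'v, 'c) gstate \<Rightarrow> nat \<Rightarrow> bool" where
  "installed_in_system g v \<longleftrightarrow> (\<exists>s. cview g s = v) \<and> (\<forall>s. cview g s \<le> v)"

text \<open>Weight constraints: wl < weight < wu with wl = n/(2(n-f)), wu = n/(2f),
  stated multiplied out (for f = 0, wu is read as +infinity); total weight at most n.\<close>
definition weights_ok :: "(nat \<Rightarrow> 's::finite \<Rightarrow> real) \<Rightarrow> nat \<Rightarrow> bool" where
  "weights_ok weight f \<longleftrightarrow>
     (\<forall>v s. real CARD('s) < 2 * (real CARD('s) - real f) * weight v s \<and>
            2 * real f * weight v s < real CARD('s)) \<and>
     (\<forall>v. (\<Sum>s\<in>UNIV. weight v s) \<le> real CARD('s))"

end

theory Submission
  imports Defs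
begin
lemma step_mono:
  assumes "step weight a g g'"
  shows "sent_su g \<subseteq> sent_su g' \<and> recv_su g s \<subseteq> recv_su g' s \<and> sent_cv g \<subseteq> sent_cv g' \<and>
    crashed g \<subseteq> crashed g' \<and> cview g s \<le> cview g' s \<and> cview g' s \<le> Suc (cview g s)"
  using assms by (cases a) auto

lemma step_phase:
  assumes "step weight a g g'" "phase g s = Changing" "cview g' s = cview g s"
  shows "phase g' s = Changing"
  using assms by (cases a) auto

lemma wm_mono:
  assumes "weighted_majority weight w Q" "Q \<subseteq> Q'" "\<And>r. weight w r \<ge> 0"
  shows "weighted_majority weight w Q'"
proof -
  have "(\<Sum>r\<in>Q. weight w r) \<le> (\<Sum>r\<in>Q'. weight w r)"
    by (rule sum_mono2) (use assms in auto)
  then show ?thesis using assms(1) unfolding weighted_majority_def by linarith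
qed

definition INV :: "(nat \<Rightarrow> 's::finite \<Rightarrow> real) \<Rightarrow> ('s, 'v, 'c) gstate \<Rightarrow> bool" where
  "INV weight g \<longleftrightarrow> finite (sent_su g) \<and> (\<forall>s. recv_su g s \<subseteq> sent_su g) \<and>
    (\<forall>s. phase g s = Changing \<longrightarrow> (\<exists>x. (s, x, cview g s) \<in> sent_su g)) \<and>
    (\<forall>s w. w < cview g s \<longrightarrow> weighted_majority weight w {r. \<exists>x. (r,x,w) \<in> sent_su g})"

lemma step_inv:
  assumes st: "step weight a g g'" and I: "INV weight g" and pos: "\<And>w r. weight w r \<ge> 0"
  shows "INV weight g'"
proof (cases a)
  case (Install t)
  from st Install obtain x where
    wm: "weighted_majority weight (cview g t) (su_senders g t (cview g t))" and
    g': "g' = g\<lparr>rst := (rst g)(t := x), cview := (cview g)(t := Suc (cview g t)), phase := (phase g)(t := Normal)\<rparr>"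
    by auto
  have sub: "su_senders g t (cview g t) \<subseteq> {r. \<exists>x. (r,x,cview g t) \<in> sent_su g}"
    using I unfolding INV_def su_senders_def by blast
  have wm2: "weighted_majority weight (cview g t) {r. \<exists>x. (r,x,cview g t) \<in> sent_su g}"
    using wm_mono[OF wm sub pos] .
  show ?thesis using I unfolding INV_def g'
    apply (simp)
    apply (intro allI impI conjI)
    using wm2 less_Suc_eq by (auto split: if_splits)
next
  case (StartChange t)
  from st StartChange have
    g': "g' = g\<lparr>sent_cv := insert (t, Suc (cview g t)) (sent_cv g),
            phase := (phase g)(t := Changing),
            sent_su := insert (t, rst g t, cview g t) (sent_su g)\<rparr>" by auto
  have "weighted_majority weight w {r. \<exists>x. (r,x,w) \<in> sent_su g'}" if "w < cview g' s" for s w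
  proof -
    have "weighted_majority weight w {r. \<exists>x. (r,x,w) \<in> sent_su g}" using I that g' unfolding INV_def by auto
    then show ?thesis by (rule wm_mono) (auto simp: g' pos)
  qed
  then show ?thesis using I unfolding INV_def by (auto simp: g' simp del: split_paired_Ex)
qed (use st I in \<open>auto simp: INV_def\<close>)

lemma install_enabled:
  assumes "s \<notin> crashed g" "phase g s = Changing"
    "weighted_majority weight (cview g s) (su_senders g s (cview g s))"
    "finite (recv_su g s)"
  shows "enabled weight (Install s) g"
proof -
  let ?c = "cview g s"
  define S where "S = (\<lambda>(r, x, w). (r, x)) ` (recv_su g s \<inter> {m. snd (snd m) = ?c})"
  have fin: "finite S" unfolding S_def using assms(4) by auto
  have memS: "p \<in> S \<longleftrightarrow> (fst p, snd p, ?c) \<in> recv_su g s" for p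
    unfolding S_def by (cases p) force
  have "su_senders g s ?c \<noteq> {}"
  proof
    assume "su_senders g s ?c = {}"
    then show False using assms(3) unfolding weighted_majority_def by simp
  qed
  then have ne: "S \<noteq> {}" unfolding su_senders_def using memS by fastforce
  define K where "K = (\<lambda>p. tskey (snd p)) ` S"
  have finK: "finite K" and neK: "K \<noteq> {}" using fin ne unfolding K_def by auto
  have "Max K \<in> K" using finK neK by (rule Max_in)
  then obtain p where p: "p \<in> S" "tskey (snd p) = Max K" unfolding K_def by auto
  have grt: "\<forall>r' y. (r', y, ?c) \<in> recv_su g s \<longrightarrow> tskey y \<le> tskey (snd p)"
  proof (intro allI impI)
    fix r' y assume "(r', y, ?c) \<in> recv_su g s"
    then have "(r', y) \<in> S" using memS by auto
    then have "tskey y \<in> K" unfolding K_def by force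
    then show "tskey y \<le> tskey (snd p)" using p(2) finK by simp
  qed
  have "step weight (Install s) g (g\<lparr>rst := (rst g)(s := snd p),
               cview := (cview g)(s := Suc (cview g s)),
               phase := (phase g)(s := Normal)\<rparr>)"
    using assms grt p(1) memS[of p]
    by (simp del: split_paired_All split_paired_Ex) (rule exI[of _ "fst p"], rule exI[of _ "snd p"], simp)
  then show ?thesis unfolding enabled_def by blast
qed

lemma en_deliver:
  assumes "s \<notin> crashed g" "m \<in> sent_su g" "m \<notin> recv_su g s"
  shows "enabled weight (DeliverSU s m) g"
  unfolding enabled_def
  by (rule exI[where x="g\<lparr>recv_su := (recv_su g)(s := insert m (recv_su g s))\<rparr>"]) (simp add: assms)

lemma en_timeout:
  assumes "s \<notin> crashed g" "phase g s = Normal"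
  shows "enabled weight (Timeout s) g"
  unfolding enabled_def
  by (rule exI[where x="g\<lparr>sent_cv := insert (s, Suc (cview g s)) (sent_cv g)\<rparr>"]) (simp add: assms)

lemma en_start:
  assumes "s \<notin> crashed g" "phase g s = Normal" "(s, Suc (cview g s)) \<in> sent_cv g"
  shows "enabled weight (StartChange s) g"
  unfolding enabled_def
  by (rule exI[where x="g\<lparr>sent_cv := insert (s, Suc (cview g s)) (sent_cv g),
            phase := (phase g)(s := Changing),
            sent_su := insert (s, rst g s, cview g s) (sent_su g)\<rparr>"]) (simp add: assms)

lemma stabilize:
  fixes h :: "nat \<Rightarrow> nat"
  assumes "\<And>j. h j \<le> h (Suc j)" "\<forall>j\<ge>i. h j \<le> v"
  shows "\<exists>k\<ge>i. \<forall>j\<ge>k. h j = h k"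
proof -
  have mono: "j \<le> k \<Longrightarrow> h j \<le> h k" for j k using lift_Suc_mono_le[of h] assms(1) by blast
  let ?A = "h ` {i..}"
  have fin: "finite ?A" by (rule finite_subset[of _ "{..v}"]) (use assms(2) in auto)
  have "Max ?A \<in> ?A" using fin by (intro Max_in) auto
  then obtain k where k: "k \<ge> i" "h k = Max ?A" by auto
  have "\<forall>j\<ge>k. h j = h k"
  proof (intro allI impI)
    fix j assume "j \<ge> k"
    have "h j \<in> ?A" using \<open>j \<ge> k\<close> k by auto
    then have "h j \<le> Max ?A" by (rule Max_ge[OF fin])
    moreover have "h k \<le> h j" using mono \<open>j \<ge> k\<close> by auto
    ultimately show "h j = h k" using k by simp
  qed
  then show ?thesis using k by blast
qed

theorem lemma6:
  fixes weight :: "nat \<Rightarrow> 's::finite \<Rightarrow> real"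
    and f :: nat
    and \<sigma> :: "nat \<Rightarrow> ('s, 'v, 'c::linorder) gstate"
    and lab :: "nat \<Rightarrow> ('s, 'v, 'c) action"
  assumes "2 * f + 1 \<le> CARD('s)"
    and "weights_ok weight f"
    and "execution weight f \<sigma> lab"
    and "installed_in_system (\<sigma> i) v"
  shows "\<exists>j\<ge>i. installed_in_system (\<sigma> j) (Suc v)"
proof (rule ccontr)
  assume nc: "\<not> ?thesis"
  from assms(3) have init: "init_state (\<sigma> 0)"
    and stp: "\<And>j. step weight (lab j) (\<sigma> j) (\<sigma> (Suc j))"
    and crd: "\<And>j. card (crashed (\<sigma> j)) \<le> f"
    and fair: "\<And>a s k. fair_owner a = Some s \<Longrightarrow> correct \<sigma> s \<Longrightarrow>
         (\<forall>j\<ge>k. enabled weight a (\<sigma> j)) \<Longrightarrow> \<exists>j\<ge>k. lab j = a"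
    unfolding execution_def by blast+
  have nf: "real CARD('s) - real f > 0" using assms(1) by simp
  have wl: "real CARD('s) < 2 * (real CARD('s) - real f) * weight w r" for w r
    using assms(2) unfolding weights_ok_def by blast
  have pos: "weight w r > 0" for w r
  proof (rule ccontr)
    assume "\<not> weight w r > 0"
    then have "2 * (real CARD('s) - real f) * weight w r \<le> 0"
      using nf by (simp add: mult_nonneg_nonpos)
    then show False using wl[of w r] by simp
  qed
  then have pos0: "weight w r \<ge> 0" for w r using less_imp_le by blast
  have inv: "INV weight (\<sigma> j)" for j
  proof (induction j)
    case 0 then show ?case using init unfolding init_state_def INV_def by auto
  next
    case (Suc j) then show ?case using step_inv[OF stp Suc.IH pos0] by blast
  qed
  have sent_mono: "j \<le> k \<Longrightarrow> sent_su (\<sigma> j) \<subseteq> sent_su (\<sigma> k)" for j k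
    using lift_Suc_mono_le[of "\<lambda>j. sent_su (\<sigma> j)"] step_mono[OF stp] by blast
  have recv_mono: "j \<le> k \<Longrightarrow> recv_su (\<sigma> j) s \<subseteq> recv_su (\<sigma> k) s" for j k s
    using lift_Suc_mono_le[of "\<lambda>j. recv_su (\<sigma> j) s"] step_mono[OF stp] by blast
  have cv_mono: "j \<le> k \<Longrightarrow> sent_cv (\<sigma> j) \<subseteq> sent_cv (\<sigma> k)" for j k
    using lift_Suc_mono_le[of "\<lambda>j. sent_cv (\<sigma> j)"] step_mono[OF stp] by blast
  have cr_mono: "j \<le> k \<Longrightarrow> crashed (\<sigma> j) \<subseteq> crashed (\<sigma> k)" for j k
    using lift_Suc_mono_le[of "\<lambda>j. crashed (\<sigma> j)"] step_mono[OF stp] by blast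
  have view_step: "cview (\<sigma> j) s \<le> cview (\<sigma> (Suc j)) s"
    "cview (\<sigma> (Suc j)) s \<le> Suc (cview (\<sigma> j) s)" for j s
    using step_mono[OF stp] by blast+
  have bound: "\<forall>s. cview (\<sigma> j) s \<le> v" if "j \<ge> i" for j
    using that
  proof (induction j rule: dec_induct)
    case base then show ?case using assms(4) unfolding installed_in_system_def by blast
  next
    case (step j)
    show ?case
    proof (rule ccontr)
      assume "\<not> (\<forall>s. cview (\<sigma> (Suc j)) s \<le> v)"
      then obtain s where "cview (\<sigma> (Suc j)) s > v" using not_le by blast
      moreover have "cview (\<sigma> j) s \<le> v" using step.IH by blast
      ultimately have "cview (\<sigma> (Suc j)) s = Suc v" using view_step(2)[of j s] by linarith
      moreover have "\<forall>s. cview (\<sigma> (Suc j)) s \<le> Suc v"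
      proof
        fix s' have "cview (\<sigma> j) s' \<le> v" using step.IH by blast
        then show "cview (\<sigma> (Suc j)) s' \<le> Suc v" using view_step(2)[of j s'] by linarith
      qed
      ultimately have "installed_in_system (\<sigma> (Suc j)) (Suc v)"
        unfolding installed_in_system_def by blast
      then show False using nc step.hyps by auto
    qed
  qed
  obtain s0 where s0: "cview (\<sigma> i) s0 = v" using assms(4) unfolding installed_in_system_def by blast
  have D: "False" if cs: "correct \<sigma> s" and stw: "\<forall>j\<ge>k. cview (\<sigma> j) s = w"
    and ch: "\<forall>j\<ge>k. phase (\<sigma> j) s = Changing" and wm: "weighted_majority weight w Q"
    and snt: "\<forall>r\<in>Q. \<exists>x k'. (r,x,w) \<in> sent_su (\<sigma> k')" for s w k Q
  proof -
    have ncr: "s \<notin> crashed (\<sigma> j)" for j using cs unfolding correct_def by blast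
    have dl: "\<exists>J. (r, x, w) \<in> recv_su (\<sigma> J) s" if "(r,x,w) \<in> sent_su (\<sigma> k')" for r x k'
    proof (rule ccontr)
      assume nr: "\<not> ?thesis"
      have "\<forall>j\<ge>k'. enabled weight (DeliverSU s (r,x,w)) (\<sigma> j)"
      proof (intro allI impI)
        fix j assume "j \<ge> k'"
        then have "(r,x,w) \<in> sent_su (\<sigma> j)" using that sent_mono by blast
        then show "enabled weight (DeliverSU s (r,x,w)) (\<sigma> j)"
          using nr ncr[of j] by (intro en_deliver) auto
      qed
      then obtain j where "lab j = DeliverSU s (r,x,w)" using fair[of "DeliverSU s (r,x,w)" s k'] cs by auto
      then have "(r,x,w) \<in> recv_su (\<sigma> (Suc j)) s" using stp[of j] by auto
      then show False using nr by blast
    qed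
    have "\<forall>r\<in>Q. \<exists>J. \<exists>x. (r, x, w) \<in> recv_su (\<sigma> J) s"
    proof
      fix r assume "r \<in> Q"
      then obtain x k' where "(r,x,w) \<in> sent_su (\<sigma> k')" using snt by blast
      then obtain J where "(r, x, w) \<in> recv_su (\<sigma> J) s" using dl by blast
      then show "\<exists>J. \<exists>x. (r, x, w) \<in> recv_su (\<sigma> J) s" by blast
    qed
    from bchoice[OF this] obtain J where JX0: "\<forall>r\<in>Q. \<exists>x. (r, x, w) \<in> recv_su (\<sigma> (J r)) s" by blast
    have JX: "\<And>r. r \<in> Q \<Longrightarrow> r \<in> su_senders (\<sigma> (J r)) s w" using JX0 unfolding su_senders_def by blast
    define T where "T = max k (Max (J ` Q))"
    have "enabled weight (Install s) (\<sigma> j)" if "j \<ge> T" for j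
    proof (rule install_enabled)
      show "s \<notin> crashed (\<sigma> j)" by (rule ncr)
      show "phase (\<sigma> j) s = Changing" using ch that T_def by auto
      have cj: "cview (\<sigma> j) s = w" using stw that T_def by auto
      have "Q \<subseteq> su_senders (\<sigma> j) s w"
      proof
        fix r assume r: "r \<in> Q"
        have "J r \<le> Max (J ` Q)" by (rule Max_ge) (use r in auto)
        then have "J r \<le> j" using that unfolding T_def by linarith
        then have "recv_su (\<sigma> (J r)) s \<subseteq> recv_su (\<sigma> j) s" by (rule recv_mono)
        then show "r \<in> su_senders (\<sigma> j) s w" using JX[OF r] unfolding su_senders_def by blast
      qed
      then show "weighted_majority weight (cview (\<sigma> j) s) (su_senders (\<sigma> j) s (cview (\<sigma> j) s))"
        using wm_mono[OF wm _ pos0] cj by simp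
      show "finite (recv_su (\<sigma> j) s)" using inv[of j] unfolding INV_def by (meson finite_subset)
    qed
    then obtain j where j: "j \<ge> T" "lab j = Install s" using fair[of "Install s" s T] cs by auto
    then have "cview (\<sigma> (Suc j)) s = Suc (cview (\<sigma> j) s)" using stp[of j] by auto
    moreover have "j \<ge> k" using j T_def by auto
    ultimately show False using stw by (metis Suc_n_not_n le_SucI)
  qed
  have A: "\<exists>k'\<ge>k. \<forall>j\<ge>k'. phase (\<sigma> j) s = Changing"
    if cs: "correct \<sigma> s" and stw: "\<forall>j\<ge>k. cview (\<sigma> j) s = w" for s w k
  proof -
    have ncr: "s \<notin> crashed (\<sigma> j)" for j using cs unfolding correct_def by blast
    have stay: "\<forall>j\<ge>k1. phase (\<sigma> j) s = Changing" if "k1 \<ge> k" "phase (\<sigma> k1) s = Changing" for k1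
    proof (intro allI impI)
      fix j assume "j \<ge> k1"
      then show "phase (\<sigma> j) s = Changing"
      proof (induction j rule: dec_induct)
        case base then show ?case using that by simp
      next
        case (step j)
        show ?case by (rule step_phase[OF stp step.IH]) (use stw that step.hyps in auto)
      qed
    qed
    show ?thesis
    proof (cases "\<exists>k1\<ge>k. phase (\<sigma> k1) s = Changing")
      case True then show ?thesis using stay by blast
    next
      case False
      then have nrm: "\<forall>j\<ge>k. phase (\<sigma> j) s = Normal" using phase.exhaust by blast
      have "\<forall>j\<ge>k. enabled weight (Timeout s) (\<sigma> j)" using nrm ncr en_timeout by blast
      then obtain j1 where j1: "j1 \<ge> k" "lab j1 = Timeout s" using fair[of "Timeout s" s k] cs by auto
      then have "(s, Suc w) \<in> sent_cv (\<sigma> (Suc j1))" using stp[of j1] stw by auto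
      then have "\<forall>j\<ge>Suc j1. enabled weight (StartChange s) (\<sigma> j)"
      proof (intro allI impI)
        fix j assume jj: "j \<ge> Suc j1"
        assume "(s, Suc w) \<in> sent_cv (\<sigma> (Suc j1))"
        then have "(s, Suc w) \<in> sent_cv (\<sigma> j)" using cv_mono[OF jj] by blast
        moreover have "cview (\<sigma> j) s = w" "phase (\<sigma> j) s = Normal" using stw nrm jj j1 by auto
        ultimately show "enabled weight (StartChange s) (\<sigma> j)"
          using ncr[of j] by (intro en_start) auto
      qed
      then obtain j2 where j2: "j2 \<ge> Suc j1" "lab j2 = StartChange s" using fair[of "StartChange s" s "Suc j1"] cs by auto
      then have "phase (\<sigma> (Suc j2)) s = Changing" using stp[of j2] by auto
      then show ?thesis using nrm j1 j2 by auto
    qed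
  qed
  have reachv: "\<exists>k\<ge>i. \<forall>j\<ge>k. cview (\<sigma> j) s = v \<and> phase (\<sigma> j) s = Changing" if cs: "correct \<sigma> s" for s
  proof -
    obtain k where k: "k \<ge> i" "\<forall>j\<ge>k. cview (\<sigma> j) s = cview (\<sigma> k) s"
      using stabilize[of "\<lambda>j. cview (\<sigma> j) s" i v] view_step(1) bound by blast
    obtain k' where k': "k' \<ge> k" "\<forall>j\<ge>k'. phase (\<sigma> j) s = Changing" using A[OF cs k(2)] by blast
    have stw': "\<forall>j\<ge>k'. cview (\<sigma> j) s = cview (\<sigma> k) s"
    proof (intro allI impI)
      fix j assume "j \<ge> k'"
      then have "j \<ge> k" using k'(1) by linarith
      then show "cview (\<sigma> j) s = cview (\<sigma> k) s" using k(2) by blast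
    qed
    have "cview (\<sigma> k) s = v"
    proof (rule ccontr)
      assume "cview (\<sigma> k) s \<noteq> v"
      moreover have "cview (\<sigma> k) s \<le> v" using bound[OF k(1)] by blast
      ultimately have lt: "cview (\<sigma> k) s < cview (\<sigma> i) s0" using s0 by simp
      let ?Q = "{r. \<exists>x. (r, x, cview (\<sigma> k) s) \<in> sent_su (\<sigma> i)}"
      have "\<forall>s w. w < cview (\<sigma> i) s \<longrightarrow> weighted_majority weight w {r. \<exists>x. (r,x,w) \<in> sent_su (\<sigma> i)}"
        using inv[of i] unfolding INV_def by blast
      then have "weighted_majority weight (cview (\<sigma> k) s) ?Q" using lt by blast
      moreover have "\<forall>r\<in>?Q. \<exists>x k'. (r,x,cview (\<sigma> k) s) \<in> sent_su (\<sigma> k')" by blast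
      ultimately show False using D[OF cs stw' k'(2)] by blast
    qed
    moreover have "k' \<ge> i" using k k' by simp
    ultimately show ?thesis using k' stw' by metis
  qed
  define C where "C = {s. correct \<sigma> s}"
  define N where "N = {s. \<not> correct \<sigma> s}"
  have "\<forall>s\<in>N. \<exists>t. s \<in> crashed (\<sigma> t)" unfolding N_def correct_def by blast
  from bchoice[OF this] obtain t where t: "\<And>s. s \<in> N \<Longrightarrow> s \<in> crashed (\<sigma> (t s))" by blast
  have cardN: "card N \<le> f"
  proof (cases "N = {}")
    case True then show ?thesis by simp
  next
    case False
    let ?T = "Max (t ` N)"
    have "N \<subseteq> crashed (\<sigma> ?T)"
    proof
      fix s assume "s \<in> N"
      then show "s \<in> crashed (\<sigma> ?T)" using t cr_mono[of "t s" ?T] by auto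
    qed
    then have "card N \<le> card (crashed (\<sigma> ?T))" by (simp add: card_mono)
    then show ?thesis using crd le_trans by blast
  qed
  have cardC: "card C + card N = CARD('s)"
  proof -
    have "C \<union> N = UNIV" "C \<inter> N = {}" unfolding C_def N_def by auto
    then show ?thesis using card_Un_disjoint[of C N] by simp
  qed
  have Cge: "real (card C) \<ge> real CARD('s) - real f" using cardC cardN by linarith
  have Cne: "C \<noteq> {}" using Cge nf by (metis card.empty of_nat_0 not_le)
  have "(\<Sum>r\<in>C. real CARD('s)) < (\<Sum>r\<in>C. 2 * (real CARD('s) - real f) * weight v r)"
    by (rule sum_strict_mono) (use Cne wl in auto)
  then have lt1: "real (card C) * real CARD('s) < 2 * (real CARD('s) - real f) * (\<Sum>r\<in>C. weight v r)"
    by (simp add: sum_distrib_left)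
  have le1: "(real CARD('s) - real f) * real CARD('s) \<le> real (card C) * real CARD('s)"
    using Cge by (rule mult_right_mono) simp
  have eq1: "2 * (real CARD('s) - real f) * (\<Sum>r\<in>C. weight v r) = (real CARD('s) - real f) * (2 * (\<Sum>r\<in>C. weight v r))"
    by (simp only: mult.assoc mult.left_commute)
  have "(real CARD('s) - real f) * real CARD('s) < (real CARD('s) - real f) * (2 * (\<Sum>r\<in>C. weight v r))"
    using le1 lt1 eq1 by linarith
  then have "real CARD('s) < 2 * (\<Sum>r\<in>C. weight v r)" using nf mult_less_cancel_left_pos by blast
  then have wmC: "weighted_majority weight v C" unfolding weighted_majority_def by simp
  obtain c0 where c0: "c0 \<in> C" using Cne by blast
  have "\<forall>r\<in>C. \<exists>x k'. (r,x,v) \<in> sent_su (\<sigma> k')"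
  proof
    fix r assume "r \<in> C"
    then obtain k where "\<forall>j\<ge>k. cview (\<sigma> j) r = v \<and> phase (\<sigma> j) r = Changing" using reachv C_def by blast
    then have "cview (\<sigma> k) r = v" "phase (\<sigma> k) r = Changing" by auto
    then show "\<exists>x k'. (r,x,v) \<in> sent_su (\<sigma> k')" using inv[of k] unfolding INV_def by blast
  qed
  moreover obtain k where "\<forall>j\<ge>k. cview (\<sigma> j) c0 = v \<and> phase (\<sigma> j) c0 = Changing"
    using reachv c0 C_def by blast
  ultimately show False using D[of c0 k v C] c0 wmC C_def by auto
qed

end
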